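(* Let $S\subset\mathbb{R}^2$ be a set of at least $4$ points in general position and let $a,b,c\in S$ be distinct. If $ab$ is an exit edge of $S$ with witness $c$, then $ac$ is not an exit edge of $S$ with witness $b$, and $bc$ is not an exit edge of $S$ with witness $a$.
   Context: General position: no three points collinear. For distinct $a,b,c\in S$, the segment $ab$ is an exit edge of $S$ with witness $c$ if there is no $p\in S$ such that the line through $a$ and $p$ strictly separates $b$ from $c$, and there is no $p\in S$ such that the line through $b$ and $p$ strictly separates $a$ from $c$. *)

theory Defs
  imports "HOL-Analysis.Analysis"
begin

type_synonym point = "real \<times> real"

definition orient :: "point \<Rightarrow> point \<Rightarrow> point \<Rightarrow> real" where
  "orient p q r = (fst q - fst p) * (snd r - snd p) - (snd q - snd p) * (fst r - fst p)"

definition general_position :: "point set \<Rightarrow> bool" where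
  "general_position S \<longleftrightarrow>
     (\<forall>p\<in>S. \<forall>q\<in>S. \<forall>r\<in>S. p \<noteq> q \<and> q \<noteq> r \<and> p \<noteq> r \<longrightarrow> orient p q r \<noteq> 0)"

definition strictly_separates :: "point \<Rightarrow> point \<Rightarrow> point \<Rightarrow> point \<Rightarrow> bool" where
  "strictly_separates a p x y \<longleftrightarrow> a \<noteq> p \<and> orient a p x * orient a p y < 0"

definition exit_edge :: "point set \<Rightarrow> point \<Rightarrow> point \<Rightarrow> point \<Rightarrow> bool" where
  "exit_edge S a b c \<longleftrightarrow>
     a \<in> S \<and> b \<in> S \<and> c \<in> S \<and> a \<noteq> b \<and> b \<noteq> c \<and> a \<noteq> c \<and>
     \<not> (\<exists>p\<in>S. strictly_separates a p b c) \<and>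
     \<not> (\<exists>p\<in>S. strictly_separates b p a c)"

end

theory Submission
  imports Defs
begin

lemma key:
  assumes "orient a d b * orient a d c > 0" "orient b d a * orient b d c > 0"
    "orient c d a * orient c d b > 0"
  shows False
proof -
  define x where "x = (fst a - fst d) * (snd b - snd d) - (snd a - snd d) * (fst b - fst d)"
  define y where "y = (fst b - fst d) * (snd c - snd d) - (snd b - snd d) * (fst c - fst d)"
  define z where "z = (fst c - fst d) * (snd a - snd d) - (snd c - snd d) * (fst a - fst d)"
  have e1: "orient a d b = -x" unfolding orient_def x_def by algebra
  have e2: "orient a d c = z" unfolding orient_def z_def by algebra
  have e3: "orient b d a = x" unfolding orient_def x_def by algebra
  have e4: "orient b d c = -y" unfolding orient_def y_def by algebra
  have e5: "orient c d a = -z" unfolding orient_def z_def by algebra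
  have e6: "orient c d b = y" unfolding orient_def y_def by algebra
  have h1: "x * z < 0" "x * y < 0" "z * y < 0" using assms e1 e2 e3 e4 e5 e6 by auto
  have "(x*z)*(x*y) > 0" using h1 by (simp add: mult_neg_neg)
  hence "(x*x)*(z*y) > 0" by (simp add: algebra_simps)
  moreover have "x*x \<ge> 0" by simp
  moreover have "x*x*(z*y) \<le> 0" using h1(3) mult_nonneg_nonpos[of "x*x" "z*y"] by simp
  ultimately show False by simp
qed

lemma fourth:
  assumes "finite S" "card S \<ge> 4" "a \<in> S" "b \<in> S" "c \<in> S"
  shows "\<exists>d\<in>S. d \<noteq> a \<and> d \<noteq> b \<and> d \<noteq> c"
proof (rule ccontr)
  assume "\<not> ?thesis"
  hence "S \<subseteq> {a,b,c}" by auto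
  hence "card S \<le> card {a,b,c}" by (simp add: card_mono)
  also have "\<dots> \<le> 3" by (simp add: card_insert_le_m1)
  finally show False using assms by simp
qed

theorem mainTheorem3:
  fixes S :: "(real \<times> real) set" and a b c :: "real \<times> real"
  assumes "finite S" and "card S \<ge> 4"
    and "general_position S"
    and "a \<in> S" and "b \<in> S" and "c \<in> S"
    and "a \<noteq> b" and "b \<noteq> c" and "a \<noteq> c"
    and "exit_edge S a b c"
  shows "\<not> exit_edge S a c b \<and> \<not> exit_edge S b c a"
proof -
  obtain d where d: "d \<in> S" "d \<noteq> a" "d \<noteq> b" "d \<noteq> c"
    using fourth[OF assms(1,2,4,5,6)] by blast
  have gp: "\<And>p q r. p \<in> S \<Longrightarrow> q \<in> S \<Longrightarrow> r \<in> S \<Longrightarrow> p \<noteq> q \<Longrightarrow> q \<noteq> r \<Longrightarrow> p \<noteq> r \<Longrightarrow> orient p q r \<noteq> 0"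
    using assms(3) unfolding general_position_def by blast
  have nz: "orient a d b \<noteq> 0" "orient a d c \<noteq> 0" "orient b d a \<noteq> 0" "orient b d c \<noteq> 0"
    "orient c d a \<noteq> 0" "orient c d b \<noteq> 0"
    by (rule gp; use d assms(4-9) in auto)+
  have pos: "\<And>u v. u \<noteq> 0 \<Longrightarrow> v \<noteq> 0 \<Longrightarrow> \<not> u * v < 0 \<Longrightarrow> u * v > (0::real)"
    by (metis linorder_neqE_linordered_idom mult_eq_0_iff)
  have q1: "\<not> orient a d b * orient a d c < 0" "\<not> orient b d a * orient b d c < 0"
  proof -
    have A: "\<not> (\<exists>p\<in>S. strictly_separates a p b c)" "\<not> (\<exists>p\<in>S. strictly_separates b p a c)"
      using assms(10) unfolding exit_edge_def by simp_all
    show "\<not> orient a d b * orient a d c < 0" using A(1) d(1,2) unfolding strictly_separates_def by auto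
    show "\<not> orient b d a * orient b d c < 0" using A(2) d(1,3) unfolding strictly_separates_def by auto
  qed
  have p1: "orient a d b * orient a d c > 0" "orient b d a * orient b d c > 0"
    using q1 nz pos by blast+
  show ?thesis
  proof (intro conjI notI)
    assume "exit_edge S a c b"
    hence "\<not> (\<exists>p\<in>S. strictly_separates c p a b)" unfolding exit_edge_def by simp
    hence "\<not> orient c d a * orient c d b < 0"
      using d(1,4) unfolding strictly_separates_def by auto
    hence "orient c d a * orient c d b > 0" using nz pos by blast
    thus False using key p1 by blast
  next
    assume "exit_edge S b c a"
    hence "\<not> (\<exists>p\<in>S. strictly_separates c p b a)" unfolding exit_edge_def by simp
    hence "\<not> orient c d b * orient c d a < 0"
      using d(1,4) unfolding strictly_separates_def by auto
    hence "orient c d b * orient c d a > 0" using nz pos by blast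
    thus False using key p1 by (simp add: mult.commute)
  qed
qed

end
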